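(* Consider a distributed storage system $\mathrm{DSS}(n,k,d,h,\alpha,\alpha',\beta,M)$ with $1\le k\le d\le n-1$, $h\ge 0$. Then in its information flow graph there exist a sequence of $k$ failures/repairs and a data collector whose minimum $S$–$\mathrm{DC}$ cut has capacity at most $$\sum_{i=0}^{k-1}\min\{\alpha,\,(d+h-i)\beta\}.$$ Consequently, if every data collector can reconstruct the file of size $M$ under all failure/repair sequences, then $\sum_{i=0}^{k-1}\min\{\alpha,(d+h-i)\beta\}\ge M$.
   Context: $\mathrm{DSS}(n,k,d,h,\alpha,\alpha',\beta,M)$: a file of $M$ packets is stored on $n$ complete storage nodes of capacity $\alpha$ each so that any $k$ of them reconstruct the file; in addition there are $h$ repairing storage nodes of capacity $\alpha'<\alpha$, which receive data from the source, never fail and are never contacted by data collectors. When a complete node fails, a new node is created receiving $\beta$ packets from each of $d$ surviving complete nodes and from each of the $h$ repairing nodes. Information flow graph: source $S$; each complete node $x$ is a pair $x_{in}\to x_{out}$ with capacity $\alpha$, initial nodes have edges $S\to x_{in}$; each repairing node $r$ is a pair $r_{in}\to r_{out}$ with capacity $\alpha'$ and edge $S\to r_{in}$; at each repair the new node $y$ gets edges of capacity $\beta$ from $x_{out}$ of the $d$ chosen active complete nodes and from $r_{out}$ of all $h$ repairing nodes; a data collector has infinite-capacity edges from the out-vertices of some $k$ active complete nodes. *)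

theory Defs
  imports "HOL-Library.Extended_Real"
begin

text \<open>Complete storage nodes are indexed
 by nat: initial nodes are 0..n-1, the node created at the t-th repair (t = 0,1,...)
 is n + t. Repairing nodes are indexed 0..h-1.\<close>
datatype vtx = Src | In nat | Out nat | RIn nat | ROut nat | DC

text \<open>A failure/repair step is a pair (failed node, set of d helper complete nodes).\<close>
type_synonym step = "nat \<times> nat set"

primrec valid_from :: "nat \<Rightarrow> nat \<Rightarrow> nat set \<Rightarrow> step list \<Rightarrow> bool" where
  "valid_from d nxt A [] = True"
| "valid_from d nxt A (s # ss) =
     (fst s \<in> A \<and> snd s \<subseteq> A - {fst s} \<and> card (snd s) = d \<and>
      valid_from d (Suc nxt) (insert nxt (A - {fst s})) ss)"

primrec active_from :: "nat \<Rightarrow> nat set \<Rightarrow> step list \<Rightarrow> nat set" where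
  "active_from nxt A [] = A"
| "active_from nxt A (s # ss) = active_from (Suc nxt) (insert nxt (A - {fst s})) ss"

definition valid_seq :: "nat \<Rightarrow> nat \<Rightarrow> step list \<Rightarrow> bool" where
  "valid_seq n d seq = valid_from d n {0..<n} seq"

definition active :: "nat \<Rightarrow> step list \<Rightarrow> nat set" where
  "active n seq = active_from n {0..<n} seq"

text \<open>Edges (tail, head, capacity) of the information flow graph after the
 repairs in seq, with a data collector attached to the complete nodes in K.\<close>
definition flow_edges ::
  "nat \<Rightarrow> nat \<Rightarrow> real \<Rightarrow> real \<Rightarrow> real \<Rightarrow> step list \<Rightarrow> nat set \<Rightarrow> (vtx \<times> vtx \<times> ereal) set" where
  "flow_edges n h \<alpha> \<alpha>' \<beta> seq K =
     {(Src, In i, ereal \<alpha>) | i. i < n}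
   \<union> {(In x, Out x, ereal \<alpha>) | x. x < n + length seq}
   \<union> {(Src, RIn r, ereal \<alpha>') | r. r < h}
   \<union> {(RIn r, ROut r, ereal \<alpha>') | r. r < h}
   \<union> {(Out x, In (n + t), ereal \<beta>) | x t. t < length seq \<and> x \<in> snd (seq ! t)}
   \<union> {(ROut r, In (n + t), ereal \<beta>) | r t. r < h \<and> t < length seq}
   \<union> {(Out x, DC, \<infinity>) | x. x \<in> K}"

definition cut_value :: "(vtx \<times> vtx \<times> ereal) set \<Rightarrow> vtx set \<Rightarrow> ereal" where
  "cut_value E S = (\<Sum>e \<in> {e \<in> E. fst e \<in> S \<and> fst (snd e) \<notin> S}. snd (snd e))"

definition min_cut :: "(vtx \<times> vtx \<times> ereal) set \<Rightarrow> ereal" where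
  "min_cut E = (INF S \<in> {S. Src \<in> S \<and> DC \<notin> S}. cut_value E S)"

end

theory Submission
  imports Defs
begin

definition hs :: "nat \<Rightarrow> nat \<Rightarrow> nat \<Rightarrow> nat set" where
  "hs n d t = {Suc t..<Suc d} \<union> {n..<n+t}"

lemma card_hs: "t \<le> d \<Longrightarrow> d < n \<Longrightarrow> card (hs n d t) = d"
  unfolding hs_def by (subst card_Un_disjoint) auto

lemma valid_aux:
  assumes "t \<le> k" "k \<le> d" "d < n"
  shows "valid_from d (n+t) ({t..<n} \<union> {n..<n+t}) (map (\<lambda>j. (j, hs n d j)) [t..<k]) \<and>
         active_from (n+t) ({t..<n} \<union> {n..<n+t}) (map (\<lambda>j. (j, hs n d j)) [t..<k])
           = {k..<n} \<union> {n..<n+k}"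
  using assms
proof (induction "k - t" arbitrary: t)
  case 0
  then show ?case by simp
next
  case (Suc m)
  then have tk: "t < k" by simp
  have up: "[t..<k] = t # [Suc t..<k]" using tk by (simp add: upt_conv_Cons)
  have ins: "insert (n+t) (({t..<n} \<union> {n..<n+t}) - {t}) = {Suc t..<n} \<union> {n..<n+Suc t}"
    using tk Suc.prems by auto
  have IH: "valid_from d (n+Suc t) ({Suc t..<n} \<union> {n..<n+Suc t}) (map (\<lambda>j. (j, hs n d j)) [Suc t..<k]) \<and>
         active_from (n+Suc t) ({Suc t..<n} \<union> {n..<n+Suc t}) (map (\<lambda>j. (j, hs n d j)) [Suc t..<k])
           = {k..<n} \<union> {n..<n+k}"
    using Suc.hyps(1)[of "Suc t"] Suc.hyps(2) Suc.prems tk by simp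
  have sub: "hs n d t \<subseteq> ({t..<n} \<union> {n..<n+t}) - {t}"
    using Suc.prems tk unfolding hs_def by auto
  have cd: "card (hs n d t) = d" using card_hs Suc.prems tk by simp
  show ?case using IH ins sub cd tk Suc.prems by (simp add: up)
qed

lemma valid_seq_ex:
  assumes "k \<le> d" "d < n"
  shows "valid_seq n d (map (\<lambda>j. (j, hs n d j)) [0..<k]) \<and>
         active n (map (\<lambda>j. (j, hs n d j)) [0..<k]) = {k..<n} \<union> {n..<n+k}"
  using valid_aux[of 0 k d n] assms unfolding valid_seq_def active_def by simp

definition Dset :: "nat \<Rightarrow> nat \<Rightarrow> nat \<Rightarrow> real \<Rightarrow> real \<Rightarrow> nat \<Rightarrow> (vtx \<times> vtx \<times> ereal) set" where
  "Dset n d h \<alpha> \<beta> i = (if \<alpha> \<le> real (d+h-i) * \<beta> then {(In (n+i), Out (n+i), ereal \<alpha>)}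
     else (\<lambda>x. (Out x, In (n+i), ereal \<beta>)) ` {Suc i..<Suc d} \<union> (\<lambda>r. (ROut r, In (n+i), ereal \<beta>)) ` {..<h})"

definition Tset :: "nat \<Rightarrow> nat \<Rightarrow> nat \<Rightarrow> nat \<Rightarrow> real \<Rightarrow> real \<Rightarrow> vtx set" where
  "Tset n k d h \<alpha> \<beta> = insert DC (Out ` {n..<n+k} \<union> In ` {n+i | i. i < k \<and> \<not> \<alpha> \<le> real (d+h-i) * \<beta>})"

lemma cut_sub:
  assumes "k \<le> d" "d < n"
  shows "{e \<in> flow_edges n h \<alpha> \<alpha>' \<beta> (map (\<lambda>j. (j, hs n d j)) [0..<k]) {n..<n+k}.
           fst e \<in> - Tset n k d h \<alpha> \<beta> \<and> fst (snd e) \<notin> - Tset n k d h \<alpha> \<beta>}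
         \<subseteq> (\<Union>i<k. Dset n d h \<alpha> \<beta> i)"
proof
  fix e assume e: "e \<in> {e \<in> flow_edges n h \<alpha> \<alpha>' \<beta> (map (\<lambda>j. (j, hs n d j)) [0..<k]) {n..<n+k}.
           fst e \<in> - Tset n k d h \<alpha> \<beta> \<and> fst (snd e) \<notin> - Tset n k d h \<alpha> \<beta>}"
  show "e \<in> (\<Union>i<k. Dset n d h \<alpha> \<beta> i)"
    using e assms unfolding flow_edges_def Tset_def Dset_def hs_def
    apply (auto simp: image_iff)
    subgoal for xa
      apply (erule allE[of _ xa], erule disjE)
       apply (erule allE[of _ "xa - n"])
       apply simp
       apply (rule bexI[of _ "xa - n"])
        apply (auto simp: of_nat_diff)
      done
    subgoal for i xa
      by (erule ballE[of _ _ xa]) auto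
    done
qed

lemma Dsum:
  assumes "i < d"
  shows "(\<Sum>e\<in>Dset n d h \<alpha> \<beta> i. snd (snd e)) = ereal (min \<alpha> (real (d + h - i) * \<beta>))"
proof (cases "\<alpha> \<le> real (d+h-i) * \<beta>")
  case True
  then show ?thesis unfolding Dset_def by simp
next
  case False
  let ?A = "(\<lambda>x. (Out x, In (n+i), ereal \<beta>)) ` {Suc i..<Suc d}"
  let ?B = "(\<lambda>r. (ROut r, In (n+i), ereal \<beta>)) ` {..<h}"
  have dis: "?A \<inter> ?B = {}" by auto
  have sA: "(\<Sum>e\<in>?A. snd (snd e)) = ereal (real (d - i) * \<beta>)"
    by (subst sum.reindex) (auto simp: inj_on_def sum_ereal[symmetric])
  have sB: "(\<Sum>e\<in>?B. snd (snd e)) = ereal (real h * \<beta>)"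
    by (subst sum.reindex) (auto simp: inj_on_def sum_ereal[symmetric])
  have "(\<Sum>e\<in>Dset n d h \<alpha> \<beta> i. snd (snd e)) = (\<Sum>e\<in>?A. snd (snd e)) + (\<Sum>e\<in>?B. snd (snd e))"
    unfolding Dset_def using False dis by (simp add: sum.union_disjoint)
  also have "\<dots> = ereal (real (d + h - i) * \<beta>)"
    using sA sB assms by (simp add: of_nat_diff algebra_simps)
  finally show ?thesis using False by simp
qed

theorem proposition2:
  fixes n k d h :: nat and \<alpha> \<alpha>' \<beta> M :: real
  assumes "1 \<le> k" and "k \<le> d" and "d \<le> n - 1"
    and "0 \<le> \<alpha>'" and "\<alpha>' < \<alpha>" and "0 \<le> \<beta>"
  shows "(\<exists>seq K. valid_seq n d seq \<and> length seq = k \<and> K \<subseteq> active n seq \<and> card K = k \<and>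
            min_cut (flow_edges n h \<alpha> \<alpha>' \<beta> seq K)
              \<le> ereal (\<Sum>i<k. min \<alpha> (real (d + h - i) * \<beta>)))
       \<and> ((\<forall>seq K. valid_seq n d seq \<and> K \<subseteq> active n seq \<and> card K = k \<longrightarrow>
              ereal M \<le> min_cut (flow_edges n h \<alpha> \<alpha>' \<beta> seq K))
           \<longrightarrow> M \<le> (\<Sum>i<k. min \<alpha> (real (d + h - i) * \<beta>)))"
proof -
  have dn: "d < n" using assms by linarith
  define seq where "seq = map (\<lambda>j. (j, hs n d j)) [0..<k]"
  define K where "K = {n..<n+k}"
  define E where "E = flow_edges n h \<alpha> \<alpha>' \<beta> seq K"
  define T where "T = Tset n k d h \<alpha> \<beta>"
  have vs: "valid_seq n d seq" and act: "active n seq = {k..<n} \<union> {n..<n+k}"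
    using valid_seq_ex[OF assms(2) dn] unfolding seq_def by auto
  have Kact: "K \<subseteq> active n seq" unfolding K_def act by auto
  have cK: "card K = k" unfolding K_def by simp
  have len: "length seq = k" unfolding seq_def by simp
  have mc: "min_cut E \<le> cut_value E (- T)"
    unfolding min_cut_def by (rule INF_lower) (auto simp: T_def Tset_def)
  have sub: "{e \<in> E. fst e \<in> - T \<and> fst (snd e) \<notin> - T} \<subseteq> (\<Union>i<k. Dset n d h \<alpha> \<beta> i)"
    unfolding E_def T_def seq_def K_def by (rule cut_sub[OF assms(2) dn])
  have finD: "finite (Dset n d h \<alpha> \<beta> i)" for i unfolding Dset_def by auto
  have nn: "0 \<le> snd (snd e)" if "e \<in> Dset n d h \<alpha> \<beta> i" for e i
    using that assms(4,5,6) unfolding Dset_def by (auto split: if_splits)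
  have "cut_value E (- T) \<le> (\<Sum>e\<in>(\<Union>i<k. Dset n d h \<alpha> \<beta> i). snd (snd e))"
    unfolding cut_value_def
    by (rule sum_mono2) (use sub finD nn in auto)
  also have "\<dots> = (\<Sum>i<k. \<Sum>e\<in>Dset n d h \<alpha> \<beta> i. snd (snd e))"
    by (rule sum.UNION_disjoint) (auto simp: finD Dset_def split: if_splits)
  also have "\<dots> = (\<Sum>i<k. ereal (min \<alpha> (real (d + h - i) * \<beta>)))"
    by (rule sum.cong) (use Dsum assms(2) in auto)
  also have "\<dots> = ereal (\<Sum>i<k. min \<alpha> (real (d + h - i) * \<beta>))"
    by (rule sum_ereal)
  finally have bound: "min_cut E \<le> ereal (\<Sum>i<k. min \<alpha> (real (d + h - i) * \<beta>))"
    using mc by simp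
  show ?thesis
  proof
    show "\<exists>seq K. valid_seq n d seq \<and> length seq = k \<and> K \<subseteq> active n seq \<and> card K = k \<and>
            min_cut (flow_edges n h \<alpha> \<alpha>' \<beta> seq K)
              \<le> ereal (\<Sum>i<k. min \<alpha> (real (d + h - i) * \<beta>))"
      using vs len Kact cK bound unfolding E_def by blast
    show "(\<forall>seq K. valid_seq n d seq \<and> K \<subseteq> active n seq \<and> card K = k \<longrightarrow>
              ereal M \<le> min_cut (flow_edges n h \<alpha> \<alpha>' \<beta> seq K))
           \<longrightarrow> M \<le> (\<Sum>i<k. min \<alpha> (real (d + h - i) * \<beta>))"
    proof
      assume H: "\<forall>seq K. valid_seq n d seq \<and> K \<subseteq> active n seq \<and> card K = k \<longrightarrow>
              ereal M \<le> min_cut (flow_edges n h \<alpha> \<alpha>' \<beta> seq K)"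
      have "ereal M \<le> min_cut E" using H vs Kact cK unfolding E_def by blast
      then have "ereal M \<le> ereal (\<Sum>i<k. min \<alpha> (real (d + h - i) * \<beta>))" using bound by (rule order_trans)
      then show "M \<le> (\<Sum>i<k. min \<alpha> (real (d + h - i) * \<beta>))" by simp
    qed
  qed
qed

end
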